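(* Let $T,M,\delta,\tau$ be as in the setup and $\xi>0$. Consider the Batch procedure: set $W=W'=V_T$; while $W'\neq\emptyset$: let $L(W')=\{v\in W':C_{W'}(v)\le k(1+\xi)\tau(W')/|W'|\}$, set $W'\leftarrow W'\setminus L(W')$, and if $W'\neq\emptyset$ and $\rho(W')\ge\rho(W)$ set $W\leftarrow W'$. Output $W$. Then in every iteration $L(W')\neq\emptyset$ (so the procedure terminates), and the output satisfies $\rho(W)\ge\frac{1}{k(1+\xi)}\mathrm{OPT}$.
   Context: Setup. A temporal network is a pair $T=(V_T,E_T)$ where $V_T$ is a finite set of $n$ vertices and $E_T$ is a finite set of temporal edges $(u,v,t)$ with $u,v\in V_T$ and timestamp $t\in\mathbb{R}_{>0}$; timestamps are assumed distinct. A $k$-vertex $\ell$-edge temporal motif ($k,\ell\ge 2$) is a pair $M=(K,\sigma)$ where $K=(V_K,E_K)$ is a directed, weakly connected multigraph with $|V_K|=k$, $|E_K|=\ell$, and $\sigma$ is an ordering of $E_K$; equivalently $M$ is the sequence $\langle(x_1,y_1),\dots,(x_\ell,y_\ell)\rangle$ of its edges in the order $\sigma$. Given $\delta>0$, a $\delta$-instance of $M$ in a temporal network is a sequence $S=\langle(x'_1,y'_1,t'_1),\dots,(x'_\ell,y'_\ell,t'_\ell)\rangle$ of $\ell$ distinct temporal edges of that network with $t'_1<\dots<t'_\ell$ such that (1) there is a bijection $h$ from the set of vertices appearing in $S$ onto $V_K$ with $h(x'_i)=x_i$ and $h(y'_i)=y_i$ for all $i\in[\ell]$, and (2) $t'_\ell-t'_1\le\delta$.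 We write $v\in S$ if $v$ is an endpoint of some edge of $S$; every $\delta$-instance contains exactly $k$ vertices. For $W\subseteq V_T$, $T[W]=(W,\{(u,v,t)\in E_T:u,v\in W\})$ is the induced temporal subnetwork and $\mathcal{S}_W$ is the set of $\delta$-instances of $M$ in $T[W]$. A weighting function $\tau$ assigns a weight $\tau(S)>0$ to each $\delta$-instance $S$ of $M$ in $T$; for $W\subseteq V_T$, $\tau(W)=\sum_{S\in\mathcal{S}_W}\tau(S)$. The temporal motif degree of $v$ in $T[W]$ is $C_W(v)=\sum_{S\in\mathcal{S}_W:\,v\in S}\tau(S)$. The density of a nonempty $W\subseteq V_T$ is $\rho(W)=\tau(W)/|W|$, and $\mathrm{OPT}=\max_{\emptyset\ne W\subseteq V_T}\rho(W)$ is the optimal value of the Temporal Motif Densest Subnetwork (TMDS) problem. *)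

theory Defs
  imports Complex_Main
begin

type_synonym 'v tedge = "'v \<times> 'v \<times> real"

definition src :: "'v tedge \<Rightarrow> 'v" where "src e = fst e"
definition dst :: "'v tedge \<Rightarrow> 'v" where "dst e = fst (snd e)"
definition time :: "'v tedge \<Rightarrow> real" where "time e = snd (snd e)"

definition temporal_network :: "'v set \<Rightarrow> 'v tedge set \<Rightarrow> bool" where
  "temporal_network V E \<longleftrightarrow> finite V \<and> finite E \<and>
     (\<forall>e\<in>E. src e \<in> V \<and> dst e \<in> V \<and> time e > 0) \<and>
     (\<forall>e\<in>E. \<forall>f\<in>E. time e = time f \<longrightarrow> e = f)"

text \<open>A motif is given as the list of its edges in the order sigma.\<close>
definition motif_verts :: "('m \<times> 'm) list \<Rightarrow> 'm set" where
  "motif_verts M = fst ` set M \<union> snd ` set M"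

definition weakly_connected :: "('m \<times> 'm) list \<Rightarrow> bool" where
  "weakly_connected M \<longleftrightarrow>
     (\<forall>a\<in>motif_verts M. \<forall>b\<in>motif_verts M. (a, b) \<in> (set M \<union> (set M)\<inverse>)\<^sup>*)"

definition is_motif :: "('m \<times> 'm) list \<Rightarrow> bool" where
  "is_motif M \<longleftrightarrow> card (motif_verts M) \<ge> 2 \<and> length M \<ge> 2 \<and> weakly_connected M"

definition kk :: "('m \<times> 'm) list \<Rightarrow> nat" where
  "kk M = card (motif_verts M)"

definition svert :: "'v tedge list \<Rightarrow> 'v set" where
  "svert S = (\<Union>e\<in>set S. {src e, dst e})"

definition is_instance :: "'v tedge set \<Rightarrow> ('m \<times> 'm) list \<Rightarrow> real \<Rightarrow> 'v tedge list \<Rightarrow> bool" where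
  "is_instance E M \<delta> S \<longleftrightarrow>
     length S = length M \<and> distinct S \<and> set S \<subseteq> E \<and> S \<noteq> [] \<and>
     sorted_wrt (\<lambda>e f. time e < time f) S \<and>
     (\<exists>h. bij_betw h (svert S) (motif_verts M) \<and>
          (\<forall>i<length M. h (src (S ! i)) = fst (M ! i) \<and> h (dst (S ! i)) = snd (M ! i))) \<and>
     time (last S) - time (hd S) \<le> \<delta>"

definition induced :: "'v tedge set \<Rightarrow> 'v set \<Rightarrow> 'v tedge set" where
  "induced E W = {e\<in>E. src e \<in> W \<and> dst e \<in> W}"

definition instances :: "'v tedge set \<Rightarrow> ('m \<times> 'm) list \<Rightarrow> real \<Rightarrow> 'v set \<Rightarrow> 'v tedge list set" where
  "instances E M \<delta> W = {S. is_instance (induced E W) M \<delta> S}"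

definition tauW :: "('v tedge list \<Rightarrow> real) \<Rightarrow> 'v tedge set \<Rightarrow> ('m \<times> 'm) list \<Rightarrow> real \<Rightarrow> 'v set \<Rightarrow> real" where
  "tauW \<tau> E M \<delta> W = (\<Sum>S\<in>instances E M \<delta> W. \<tau> S)"

definition motif_deg :: "('v tedge list \<Rightarrow> real) \<Rightarrow> 'v tedge set \<Rightarrow> ('m \<times> 'm) list \<Rightarrow> real \<Rightarrow> 'v set \<Rightarrow> 'v \<Rightarrow> real" where
  "motif_deg \<tau> E M \<delta> W v = (\<Sum>S\<in>{S\<in>instances E M \<delta> W. v \<in> svert S}. \<tau> S)"

definition density :: "('v tedge list \<Rightarrow> real) \<Rightarrow> 'v tedge set \<Rightarrow> ('m \<times> 'm) list \<Rightarrow> real \<Rightarrow> 'v set \<Rightarrow> real" where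
  "density \<tau> E M \<delta> W = tauW \<tau> E M \<delta> W / real (card W)"

definition OPT :: "('v tedge list \<Rightarrow> real) \<Rightarrow> 'v set \<Rightarrow> 'v tedge set \<Rightarrow> ('m \<times> 'm) list \<Rightarrow> real \<Rightarrow> real" where
  "OPT \<tau> V E M \<delta> = Max (density \<tau> E M \<delta> ` {W. W \<subseteq> V \<and> W \<noteq> {}})"

definition peel_set :: "('v tedge list \<Rightarrow> real) \<Rightarrow> 'v tedge set \<Rightarrow> ('m \<times> 'm) list \<Rightarrow> real \<Rightarrow> real \<Rightarrow> 'v set \<Rightarrow> 'v set" where
  "peel_set \<tau> E M \<delta> \<xi> W' = {v\<in>W'. motif_deg \<tau> E M \<delta> W' v \<le>
       real (kk M) * (1 + \<xi>) * tauW \<tau> E M \<delta> W' / real (card W')}"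

definition batch_step :: "('v tedge list \<Rightarrow> real) \<Rightarrow> 'v tedge set \<Rightarrow> ('m \<times> 'm) list \<Rightarrow> real \<Rightarrow> real \<Rightarrow> 'v set \<times> 'v set \<Rightarrow> 'v set \<times> 'v set" where
  "batch_step \<tau> E M \<delta> \<xi> st =
     (let W = fst st; W' = snd st in
      if W' = {} then st else
      (let W'' = W' - peel_set \<tau> E M \<delta> \<xi> W' in
       if W'' \<noteq> {} \<and> density \<tau> E M \<delta> W'' \<ge> density \<tau> E M \<delta> W then (W'', W'') else (W, W'')))"

definition batch_iter :: "('v tedge list \<Rightarrow> real) \<Rightarrow> 'v set \<Rightarrow> 'v tedge set \<Rightarrow> ('m \<times> 'm) list \<Rightarrow> real \<Rightarrow> real \<Rightarrow> nat \<Rightarrow> 'v set \<times> 'v set" where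
  "batch_iter \<tau> V E M \<delta> \<xi> n = (batch_step \<tau> E M \<delta> \<xi> ^^ n) (V, V)"

end

theory Submission
  imports Defs
begin

context
  fixes \<tau> :: "'v tedge list \<Rightarrow> real" and E :: "'v tedge set" and M :: "('m \<times> 'm) list"
    and \<delta> \<xi> :: real
  assumes finE: "finite E" and pos: "\<And>S. is_instance E M \<delta> S \<Longrightarrow> \<tau> S > 0"
    and xi: "\<xi> \<ge> 0"
begin

lemma inst_char: "S \<in> instances E M \<delta> W \<longleftrightarrow> is_instance E M \<delta> S \<and> svert S \<subseteq> W"
  unfolding instances_def is_instance_def induced_def svert_def by auto

lemma fin_inst: "finite (instances E M \<delta> W)"
proof -
  have "instances E M \<delta> W \<subseteq> {S. set S \<subseteq> E \<and> length S = length M}"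
    by (auto simp: inst_char is_instance_def)
  then show ?thesis by (rule finite_subset) (rule finite_lists_length_eq[OF finE])
qed

lemma tau_pos: "S \<in> instances E M \<delta> W \<Longrightarrow> \<tau> S > 0"
  using pos inst_char by blast

lemma inst_mono: "W1 \<subseteq> W2 \<Longrightarrow> instances E M \<delta> W1 \<subseteq> instances E M \<delta> W2"
  by (fastforce simp: inst_char)

lemma deg_mono: "W1 \<subseteq> W2 \<Longrightarrow> motif_deg \<tau> E M \<delta> W1 v \<le> motif_deg \<tau> E M \<delta> W2 v"
  unfolding motif_deg_def
  apply (rule sum_mono2)
    apply (rule finite_subset[OF _ fin_inst]) apply blast
  using inst_mono apply blast
  using tau_pos by (auto intro: less_imp_le)

lemma tauW_nonneg: "tauW \<tau> E M \<delta> W \<ge> 0"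
  unfolding tauW_def using tau_pos by (auto intro: sum_nonneg less_imp_le)

lemma fin_svert: "finite (svert S)"
  unfolding svert_def by auto

lemma card_svert: "is_instance E M \<delta> S \<Longrightarrow> card (svert S) = kk M"
  unfolding is_instance_def kk_def using bij_betw_same_card by blast

lemma sum_deg: "finite W \<Longrightarrow> (\<Sum>v\<in>W. motif_deg \<tau> E M \<delta> W v) = real (kk M) * tauW \<tau> E M \<delta> W"
proof -
  assume "finite W"
  let ?I = "instances E M \<delta> W"
  have "(\<Sum>v\<in>W. motif_deg \<tau> E M \<delta> W v) = (\<Sum>v\<in>W. \<Sum>S\<in>?I. if v \<in> svert S then \<tau> S else 0)"
    unfolding motif_deg_def by (simp add: sum.inter_filter fin_inst)
  also have "\<dots> = (\<Sum>S\<in>?I. \<Sum>v\<in>W. if v \<in> svert S then \<tau> S else 0)"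
    by (rule sum.swap)
  also have "\<dots> = (\<Sum>S\<in>?I. real (kk M) * \<tau> S)"
  proof (rule sum.cong[OF refl])
    fix S assume S: "S \<in> ?I"
    show "(\<Sum>v\<in>W. if v \<in> svert S then \<tau> S else 0) = real (kk M) * \<tau> S"
    proof -
      have "(\<Sum>v\<in>W. if v \<in> svert S then \<tau> S else 0) = (\<Sum>v\<in>{v\<in>W. v \<in> svert S}. \<tau> S)"
        using \<open>finite W\<close> by (rule sum.inter_filter[symmetric])
      also have "{v\<in>W. v \<in> svert S} = svert S" using S inst_char by blast
      finally show ?thesis using card_svert S inst_char by simp
    qed
  qed
  finally show "(\<Sum>v\<in>W. motif_deg \<tau> E M \<delta> W v) = real (kk M) * tauW \<tau> E M \<delta> W" by (simp add: tauW_def sum_distrib_left)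
qed

lemma peel_nonempty:
  assumes "finite W" "W \<noteq> {}"
  shows "peel_set \<tau> E M \<delta> \<xi> W \<noteq> {}"
proof
  assume e: "peel_set \<tau> E M \<delta> \<xi> W = {}"
  let ?t = "real (kk M) * (1 + \<xi>) * tauW \<tau> E M \<delta> W / real (card W)"
  have lt: "\<And>v. v \<in> W \<Longrightarrow> ?t < motif_deg \<tau> E M \<delta> W v"
    using e unfolding peel_set_def by (auto simp: not_le)
  have "(\<Sum>v\<in>W. ?t) < (\<Sum>v\<in>W. motif_deg \<tau> E M \<delta> W v)"
    by (rule sum_strict_mono[OF assms lt])
  also have "\<dots> = real (kk M) * tauW \<tau> E M \<delta> W" using sum_deg assms(1) by blast
  finally have 1: "real (card W) * ?t < real (kk M) * tauW \<tau> E M \<delta> W" by simp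
  have cW: "real (card W) > 0" using assms by auto
  have "real (card W) * ?t = real (kk M) * (1 + \<xi>) * tauW \<tau> E M \<delta> W" using cW by simp
  moreover have "real (kk M) * tauW \<tau> E M \<delta> W \<le> real (kk M) * (1 + \<xi>) * tauW \<tau> E M \<delta> W"
  proof -
    have "real (kk M) * tauW \<tau> E M \<delta> W \<ge> 0" using tauW_nonneg by simp
    then show ?thesis using xi by (simp add: mult_le_cancel_right1 algebra_simps mult_nonneg_nonneg)
  qed
  ultimately show False using 1 by linarith
qed

lemma remove_vertex:
  "tauW \<tau> E M \<delta> (W - {v}) = tauW \<tau> E M \<delta> W - motif_deg \<tau> E M \<delta> W v"
proof -
  let ?I = "instances E M \<delta> W" and ?A = "{S\<in>instances E M \<delta> W. v \<in> svert S}"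
  have eq: "instances E M \<delta> (W - {v}) = ?I - ?A" by (auto simp: inst_char)
  have "tauW \<tau> E M \<delta> W = sum \<tau> (?I - ?A) + sum \<tau> ?A"
    unfolding tauW_def by (rule sum.subset_diff) (auto simp: fin_inst)
  then show ?thesis unfolding motif_deg_def by (simp add: tauW_def eq)
qed

lemma inst_empty: "instances E M \<delta> {} = {}"
proof -
  { fix S assume "S \<in> instances E M \<delta> {}"
    then have "S \<noteq> []" "svert S = {}" by (auto simp: inst_char is_instance_def)
    then have False by (cases S) (auto simp: svert_def) }
  thus ?thesis by blast
qed

end


theorem lemmaF4:
  fixes V :: "'v set" and E :: "'v tedge set" and M :: "('m \<times> 'm) list"
    and \<delta> \<xi> :: real and \<tau> :: "'v tedge list \<Rightarrow> real"
  assumes "temporal_network V E"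
    and "V \<noteq> {}"
    and "is_motif M"
    and "\<delta> > 0"
    and "\<And>S. is_instance E M \<delta> S \<Longrightarrow> \<tau> S > 0"
    and "\<xi> > 0"
  shows "(\<forall>n. snd (batch_iter \<tau> V E M \<delta> \<xi> n) \<noteq> {} \<longrightarrow>
              peel_set \<tau> E M \<delta> \<xi> (snd (batch_iter \<tau> V E M \<delta> \<xi> n)) \<noteq> {})
       \<and> (\<exists>N. snd (batch_iter \<tau> V E M \<delta> \<xi> N) = {})
       \<and> (\<forall>N. snd (batch_iter \<tau> V E M \<delta> \<xi> N) = {} \<longrightarrow>
              density \<tau> E M \<delta> (fst (batch_iter \<tau> V E M \<delta> \<xi> N))
                \<ge> OPT \<tau> V E M \<delta> / (real (kk M) * (1 + \<xi>)))"
proof -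
  have finV: "finite V" and finE: "finite E" using assms(1) by (auto simp: temporal_network_def)
  have pos': "\<And>S. is_instance E M \<delta> S \<Longrightarrow> \<tau> S > 0" using assms(5) by blast
  have xi: "\<xi> \<ge> 0" using assms(6) by simp
  define st where "st = batch_iter \<tau> V E M \<delta> \<xi>"
  have stS: "st (Suc n) = batch_step \<tau> E M \<delta> \<xi> (st n)" for n by (simp add: st_def batch_iter_def)
  have st0: "st 0 = (V, V)" by (simp add: st_def batch_iter_def)
  have sndS: "snd (st (Suc n)) = snd (st n) - peel_set \<tau> E M \<delta> \<xi> (snd (st n))" for n
    by (auto simp: stS batch_step_def Let_def)
  have subV: "snd (st n) \<subseteq> V" for n
    by (induction n) (auto simp: st0 sndS)
  have P1: "peel_set \<tau> E M \<delta> \<xi> (snd (st n)) \<noteq> {}" if "snd (st n) \<noteq> {}" for n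
    using peel_nonempty[where \<tau>=\<tau> and M=M and \<delta>=\<delta>, OF finE pos' xi] finite_subset[OF subV finV] that by blast
  have cardst: "snd (st n) = {} \<or> card (snd (st n)) + n \<le> card V" for n
  proof (induction n)
    case 0 then show ?case by (simp add: st0)
  next
    case (Suc n)
    show ?case
    proof (cases "snd (st (Suc n)) = {}")
      case False
      then have ne: "snd (st n) \<noteq> {}" by (auto simp: sndS)
      then have ih: "card (snd (st n)) + n \<le> card V" using Suc by blast
      have "peel_set \<tau> E M \<delta> \<xi> (snd (st n)) \<subseteq> snd (st n)" by (auto simp: peel_set_def)
      then have "snd (st (Suc n)) \<subset> snd (st n)" using P1[OF ne] by (auto simp: sndS)
      then have "card (snd (st (Suc n))) < card (snd (st n))"
        using psubset_card_mono finite_subset[OF subV finV] by blast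
      then show ?thesis using ih by simp
    qed simp
  qed
  have P2: "snd (st (card V)) = {}"
  proof (rule ccontr)
    assume ne: "snd (st (card V)) \<noteq> {}"
    then have "card (snd (st (card V))) > 0" using finite_subset[OF subV finV] by (simp add: card_gt_0_iff)
    then show False using cardst[of "card V"] ne by simp
  qed
  have mono: "density \<tau> E M \<delta> (fst (st n)) \<le> density \<tau> E M \<delta> (fst (st (Suc n)))" for n
    by (auto simp: stS batch_step_def Let_def)
  have monoN: "density \<tau> E M \<delta> (fst (st m)) \<le> density \<tau> E M \<delta> (fst (st N))" if "m \<le> N" for m N
    using that
  proof (induction rule: dec_induct)
    case (step n) then show ?case using mono[of n] by linarith
  qed simp
  have inv: "density \<tau> E M \<delta> (snd (st n)) \<le> density \<tau> E M \<delta> (fst (st n))"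
    if "snd (st n) \<noteq> {}" for n
  proof (cases n)
    case 0 then show ?thesis by (simp add: st0)
  next
    case (Suc j)
    show ?thesis using that unfolding Suc stS
      by (auto simp: batch_step_def Let_def not_le split: if_splits)
  qed
  let ?F = "{W. W \<subseteq> V \<and> W \<noteq> {}}"
  have finF: "finite ?F" using finV by simp
  have neF: "?F \<noteq> {}" using assms(2) by blast
  have "OPT \<tau> V E M \<delta> \<in> density \<tau> E M \<delta> ` ?F"
    unfolding OPT_def using finF neF by (intro Max_in) auto
  then obtain Ws where Ws0: "Ws \<in> ?F" and Ws3: "OPT \<tau> V E M \<delta> = density \<tau> E M \<delta> Ws"
    by (rule imageE)
  have Ws: "Ws \<subseteq> V" "Ws \<noteq> {}" "density \<tau> E M \<delta> Ws = OPT \<tau> V E M \<delta>" using Ws0 Ws3 by auto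
  have optge: "density \<tau> E M \<delta> W \<le> OPT \<tau> V E M \<delta>" if "W \<subseteq> V" "W \<noteq> {}" for W
    unfolding OPT_def using finF that by (intro Max_ge) auto
  have kge: "kk M \<ge> 2" using assms(3) by (simp add: is_motif_def kk_def)
  have Kpos: "real (kk M) * (1 + \<xi>) > 0" using kge xi by simp
  have finWs: "finite Ws" using finite_subset[OF Ws(1) finV] .
  have degopt: "motif_deg \<tau> E M \<delta> Ws v \<ge> OPT \<tau> V E M \<delta>" if v: "v \<in> Ws" for v
  proof -
    let ?c = "real (card (Ws - {v}))"
    have cWs: "real (card Ws) = ?c + 1" using v finWs
    proof -
      have "Suc (card (Ws - {v})) = card Ws" using card_Suc_Diff1[OF finWs v] .
      then have "real (card Ws) = real (Suc (card (Ws - {v})))" by simp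
      then show ?thesis by simp
    qed
    have tW: "tauW \<tau> E M \<delta> Ws = OPT \<tau> V E M \<delta> * real (card Ws)"
    proof -
      have cp: "real (card Ws) \<noteq> 0" using finWs Ws(2) by simp
      have "tauW \<tau> E M \<delta> Ws / real (card Ws) = OPT \<tau> V E M \<delta>" using Ws(3) by (simp add: density_def)
      then show ?thesis using cp by (simp add: divide_eq_eq)
    qed
    have t': "tauW \<tau> E M \<delta> (Ws - {v}) \<le> OPT \<tau> V E M \<delta> * ?c"
    proof (cases "Ws - {v} = {}")
      case True
      then show ?thesis by (simp only: True tauW_def inst_empty[where \<tau>=\<tau> and M=M and \<delta>=\<delta>, OF finE pos' xi]) simp
    next
      case False
      have "density \<tau> E M \<delta> (Ws - {v}) \<le> OPT \<tau> V E M \<delta>" using Ws(1) False by (intro optge) auto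
      moreover have "?c > 0" using False finWs by (simp add: card_gt_0_iff)
      ultimately show ?thesis by (simp add: density_def pos_divide_le_eq)
    qed
    have "tauW \<tau> E M \<delta> (Ws - {v}) = tauW \<tau> E M \<delta> Ws - motif_deg \<tau> E M \<delta> Ws v"
      by (rule remove_vertex[where \<tau>=\<tau> and M=M and \<delta>=\<delta>, OF finE pos' xi])
    then show ?thesis using tW t' cWs by (simp add: algebra_simps)
  qed
  show ?thesis
  proof (intro conjI allI impI)
    fix n assume "snd (batch_iter \<tau> V E M \<delta> \<xi> n) \<noteq> {}"
    then show "peel_set \<tau> E M \<delta> \<xi> (snd (batch_iter \<tau> V E M \<delta> \<xi> n)) \<noteq> {}"
      using P1 by (simp add: st_def)
  next
    show "\<exists>N. snd (batch_iter \<tau> V E M \<delta> \<xi> N) = {}" using P2 by (auto simp: st_def)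
  next
    fix N assume "snd (batch_iter \<tau> V E M \<delta> \<xi> N) = {}"
    then have N: "snd (st N) = {}" by (simp add: st_def)
    have ex: "\<exists>n. \<not> Ws \<subseteq> snd (st n)" using N Ws(2) by auto
    define m where "m = (LEAST n. \<not> Ws \<subseteq> snd (st n))"
    have m1: "\<not> Ws \<subseteq> snd (st m)" unfolding m_def using LeastI_ex[OF ex] .
    have mN: "m \<le> N" unfolding m_def using N Ws(2) by (intro Least_le) auto
    have "m \<noteq> 0" using m1 Ws(1) by (auto simp: st0)
    then obtain j where j: "m = Suc j" using not0_implies_Suc by blast
    have jsub: "Ws \<subseteq> snd (st j)" using not_less_Least[of j "\<lambda>n. \<not> Ws \<subseteq> snd (st n)"] j m_def by auto
    obtain v where v: "v \<in> Ws" "v \<notin> snd (st (Suc j))" using m1 j by auto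
    have vp: "v \<in> peel_set \<tau> E M \<delta> \<xi> (snd (st j))" using v jsub sndS[of j] by auto
    let ?W = "snd (st j)"
    have "OPT \<tau> V E M \<delta> \<le> motif_deg \<tau> E M \<delta> Ws v" using degopt v(1) .
    also have "\<dots> \<le> motif_deg \<tau> E M \<delta> ?W v" by (rule deg_mono[where \<tau>=\<tau> and M=M and \<delta>=\<delta>, OF finE pos' xi jsub])
    also have "\<dots> \<le> real (kk M) * (1 + \<xi>) * tauW \<tau> E M \<delta> ?W / real (card ?W)"
      using vp by (simp add: peel_set_def)
    also have "\<dots> = real (kk M) * (1 + \<xi>) * density \<tau> E M \<delta> ?W"
      by (simp add: density_def)
    also have "\<dots> \<le> real (kk M) * (1 + \<xi>) * density \<tau> E M \<delta> (fst (st j))"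
      using inv[of j] jsub Ws(2) Kpos by (intro mult_left_mono) auto
    also have "\<dots> \<le> real (kk M) * (1 + \<xi>) * density \<tau> E M \<delta> (fst (st N))"
      using monoN[of j N] mN j Kpos by (intro mult_left_mono) auto
    finally have "OPT \<tau> V E M \<delta> \<le> real (kk M) * (1 + \<xi>) * density \<tau> E M \<delta> (fst (st N))" .
    then show "OPT \<tau> V E M \<delta> / (real (kk M) * (1 + \<xi>)) \<le> density \<tau> E M \<delta> (fst (batch_iter \<tau> V E M \<delta> \<xi> N))"
      using Kpos by (simp add: st_def pos_divide_le_eq mult.commute)
  qed
qed

end
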